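(* There exists $C(d,\Lambda)<\infty$ such that, for every $m\in\mathbb N$ and $p\in\mathbb P_m$, there exists $q\in\mathbb P_{m+2}$ with $-\mathscr Aq=p$ in $\mathbb R^d$, $q(0)=0$, $\nabla q(0)=0$ and, for every $n\in\{0,\dots,m\}$, $$|\nabla^{n+2}q(0)|\le\sum_{k=n}^mC^k|\nabla^kp(0)|.$$
   Context: $d\ge1$, $\Lambda\ge1$; $\mathbf a$ measurable, $\mathbb Z^d$-periodic, with $|\xi|^2\le\xi\cdot\mathbf a(x)\xi$, $|\eta\cdot\mathbf a(x)\xi|\le\Lambda|\eta||\xi|$. Tensors: $\mathbb T_k$ symmetric $k$-tensors indexed by $|\alpha|=k$, $S:T:=\sum_{|\alpha|=k}\frac{k!}{\alpha!}S_\alpha T_\alpha$, $|T|:=(T:T)^{1/2}$, $\nabla^ku:=(\partial^\alpha u)_{|\alpha|=k}$; $\mathbb P_m$ polynomials of degree $\le m$. Homogenized tensors $\bar{\mathbf a}^{(k)}\in\mathbb T_k$ together with correctors $\phi^{(k)}$ ($\mathbb T_k$-valued, periodic, mean zero on $Q_1=(-\frac12,\frac12)^d$): $\phi^{(0)}:=1$, $\bar{\mathbf a}^{(1)}:=0$; inductively for $p$ of degree $m$ with top part $p_m$, $L_{m-1}[p]:=\nabla\cdot(\mathbf a\nabla\sum_{k<m}\phi^{(k)}:\nabla^kp)-\sum_{k=2}^{m-1}\bar{\mathbf a}^{(k)}:\nabla^kp$, $\bar{\mathbf a}^{(m)}:\nabla^mp:=\int_{Q_1}L_{m-1}[p_m]$,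 and $\phi^{(m)}:\nabla^mp$ is the periodic mean-zero solution of $\nabla\cdot\mathbf a\nabla(\phi^{(m)}:\nabla^mp)=\bar{\mathbf a}^{(m)}:\nabla^mp-L_{m-1}[p_m]$. They satisfy $|\bar{\mathbf a}^{(k)}|\le C^k$. $\bar{\mathbf a}:=\bar{\mathbf a}^{(2)}$ is the homogenized matrix (uniformly elliptic with the same constants). The higher-order homogenized operator is $\mathscr Au:=\sum_{n\ge2}\bar{\mathbf a}^{(n)}:\nabla^nu$ (a finite sum on polynomials). *)

theory Defs
  imports "HOL-Analysis.Analysis"
begin

text \<open>Multi-indices on the coordinate type 'n (dimension d = CARD('n)) are functions
  'n => nat. Polynomials in d real variables are represented by their (finitely supported)
  coefficient functions c, i.e. the polynomial sum over alpha of c alpha * x^alpha.\<close>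

definition mdeg :: "('n::finite \<Rightarrow> nat) \<Rightarrow> nat" where
  "mdeg \<alpha> = (\<Sum>i\<in>UNIV. \<alpha> i)"

definition mfact :: "('n::finite \<Rightarrow> nat) \<Rightarrow> real" where
  "mfact \<alpha> = (\<Prod>i\<in>UNIV. fact (\<alpha> i))"

definition unitmi :: "'n \<Rightarrow> ('n \<Rightarrow> nat)" where
  "unitmi i = (\<lambda>j. if j = i then 1 else 0)"

definition in_P :: "nat \<Rightarrow> (('n::finite \<Rightarrow> nat) \<Rightarrow> real) \<Rightarrow> bool" where
  "in_P m c \<longleftrightarrow> (\<forall>\<alpha>. m < mdeg \<alpha> \<longrightarrow> c \<alpha> = 0)"

definition peval :: "(('n::finite \<Rightarrow> nat) \<Rightarrow> real) \<Rightarrow> real^'n \<Rightarrow> real" where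
  "peval c x = (\<Sum>\<alpha>\<in>{\<alpha>. c \<alpha> \<noteq> 0}. c \<alpha> * (\<Prod>i\<in>UNIV. (x $ i) ^ \<alpha> i))"

text \<open>Partial derivative partial^alpha of a polynomial (coefficientwise:
  partial^alpha x^gamma = gamma!/(gamma-alpha)! x^(gamma-alpha)).\<close>
definition pderivm :: "('n::finite \<Rightarrow> nat) \<Rightarrow> (('n \<Rightarrow> nat) \<Rightarrow> real) \<Rightarrow> (('n \<Rightarrow> nat) \<Rightarrow> real)" where
  "pderivm \<alpha> c = (\<lambda>\<beta>. c (\<lambda>i. \<beta> i + \<alpha> i) * (mfact (\<lambda>i. \<beta> i + \<alpha> i) / mfact \<beta>))"

text \<open>Symmetric k-tensors are functions on multi-indices; only entries with |alpha| = k matter.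
  Contraction S:T and norm |T|.\<close>
definition tcontr :: "nat \<Rightarrow> (('n::finite \<Rightarrow> nat) \<Rightarrow> real) \<Rightarrow> (('n \<Rightarrow> nat) \<Rightarrow> real) \<Rightarrow> real" where
  "tcontr k S T = (\<Sum>\<alpha>\<in>{\<alpha>. mdeg \<alpha> = k}. (fact k / mfact \<alpha>) * S \<alpha> * T \<alpha>)"

definition tnorm :: "nat \<Rightarrow> (('n::finite \<Rightarrow> nat) \<Rightarrow> real) \<Rightarrow> real" where
  "tnorm k T = sqrt (tcontr k T T)"

definition grad_at :: "nat \<Rightarrow> (('n::finite \<Rightarrow> nat) \<Rightarrow> real) \<Rightarrow> real^'n \<Rightarrow> (('n \<Rightarrow> nat) \<Rightarrow> real)" where
  "grad_at k c x = (\<lambda>\<alpha>. if mdeg \<alpha> = k then peval (pderivm \<alpha> c) x else 0)"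

text \<open>Higher-order homogenized operator  A u = sum_{n>=2} abar^(n) : nabla^n u, applied to a
  polynomial u (coefficient function); the sum is finite on polynomials since only
  multi-indices alpha with u(beta+alpha) nonzero contribute to the coefficient at beta.\<close>
definition hom_op :: "(nat \<Rightarrow> ('n::finite \<Rightarrow> nat) \<Rightarrow> real) \<Rightarrow> (('n \<Rightarrow> nat) \<Rightarrow> real) \<Rightarrow> (('n \<Rightarrow> nat) \<Rightarrow> real)" where
  "hom_op abar u = (\<lambda>\<beta>. \<Sum>\<alpha>\<in>{\<alpha>. 2 \<le> mdeg \<alpha> \<and> u (\<lambda>i. \<beta> i + \<alpha> i) \<noteq> 0}.
      (fact (mdeg \<alpha>) / mfact \<alpha>) * abar (mdeg \<alpha>) \<alpha> * pderivm \<alpha> u \<beta>)"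

text \<open>The matrix M_ij of a symmetric 2-tensor: abar^(2) : nabla^2 u = sum_ij M_ij d_i d_j u.\<close>
definition tmat :: "(('n::finite \<Rightarrow> nat) \<Rightarrow> real) \<Rightarrow> 'n \<Rightarrow> 'n \<Rightarrow> real" where
  "tmat T i j = T (\<lambda>l. unitmi i l + unitmi j l)"

definition bilin :: "('n::finite \<Rightarrow> 'n \<Rightarrow> real) \<Rightarrow> real^'n \<Rightarrow> real^'n \<Rightarrow> real" where
  "bilin M \<eta> \<xi> = (\<Sum>i\<in>UNIV. \<Sum>j\<in>UNIV. \<eta> $ i * M i j * \<xi> $ j)"

definition unif_elliptic :: "real \<Rightarrow> ('n::finite \<Rightarrow> 'n \<Rightarrow> real) \<Rightarrow> bool" where
  "unif_elliptic \<Lambda> M \<longleftrightarrow>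
     (\<forall>\<xi>. norm \<xi> ^ 2 \<le> bilin M \<xi> \<xi>) \<and> (\<forall>\<eta> \<xi>. \<bar>bilin M \<eta> \<xi>\<bar> \<le> \<Lambda> * norm \<eta> * norm \<xi>)"

end

theory Submission
  imports Defs "HOL-Analysis.Analysis"
begin


lemma le_mdeg: "\<alpha> i \<le> mdeg (\<alpha>::'n::finite\<Rightarrow>nat)"
  unfolding mdeg_def by (rule member_le_sum) auto

lemma mdeg_add: "mdeg (\<lambda>j. x j + y j) = mdeg x + mdeg (y::'n::finite\<Rightarrow>nat)"
  by (simp add: mdeg_def sum.distrib)

lemma finite_mdeg_le: "finite {\<alpha>::'n::finite\<Rightarrow>nat. mdeg \<alpha> \<le> N}"
proof -
  have "{\<alpha>::'n\<Rightarrow>nat. mdeg \<alpha> \<le> N} \<subseteq> {f. \<forall>x. (x \<in> UNIV \<longrightarrow> f x \<in> {..N}) \<and> (x \<notin> UNIV \<longrightarrow> f x = 0)}"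
    using le_mdeg order_trans by fastforce
  moreover have "finite {f::'n\<Rightarrow>nat. \<forall>x. (x \<in> UNIV \<longrightarrow> f x \<in> {..N}) \<and> (x \<notin> UNIV \<longrightarrow> f x = 0)}"
    by (rule finite_set_of_finite_funs) auto
  ultimately show ?thesis by (rule finite_subset)
qed

lemma finite_mdeg_eq: "finite {\<alpha>::'n::finite\<Rightarrow>nat. mdeg \<alpha> = N}"
  by (rule finite_subset[OF _ finite_mdeg_le[of N]]) auto

lemma fact_mult_le: "fact a * fact b \<le> (fact (a + b) :: real)"
proof -
  have "fact a * fact b * real (a + b choose a) = fact (a + b)"
    using binomial_fact_lemma[of a "a+b"] by (metis add_diff_cancel_left' le_add1 of_nat_fact of_nat_mult)
  moreover have "real (a + b choose a) \<ge> 1" by (simp add: Suc_leI)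
  moreover have "fact a * fact b \<ge> (0::real)" by simp
  ultimately show ?thesis by (metis mult_left_mono mult.right_neutral)
qed

lemma prod_fact_le: "finite S \<Longrightarrow> (\<Prod>i\<in>S. fact (\<alpha> i)) \<le> (fact (\<Sum>i\<in>S. \<alpha> i) :: real)"
proof (induction S rule: finite_induct)
  case empty then show ?case by simp
next
  case (insert x F)
  have "(\<Prod>i\<in>insert x F. fact (\<alpha> i)) = fact (\<alpha> x) * (\<Prod>i\<in>F. fact (\<alpha> i)::real)"
    using insert by simp
  also have "\<dots> \<le> fact (\<alpha> x) * fact (\<Sum>i\<in>F. \<alpha> i)"
    using insert by (intro mult_left_mono) auto
  also have "\<dots> \<le> fact (\<alpha> x + (\<Sum>i\<in>F. \<alpha> i))" by (rule fact_mult_le)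
  finally show ?case using insert by simp
qed

lemma mfact_pos: "mfact \<alpha> > 0"
  unfolding mfact_def by (intro prod_pos) auto

lemma mfact_le: "mfact \<alpha> \<le> fact (mdeg (\<alpha>::'n::finite\<Rightarrow>nat))"
  unfolding mfact_def mdeg_def by (rule prod_fact_le) simp

lemma wt_ge1: "fact (mdeg \<alpha>) / mfact (\<alpha>::'n::finite\<Rightarrow>nat) \<ge> 1"
  using mfact_pos[of \<alpha>] mfact_le[of \<alpha>] by simp

lemma tcontr_nonneg: "tcontr k T T \<ge> 0"
proof -
  have "\<And>x. 0 \<le> fact k / mfact x * T x * T x" using mfact_pos
    by (metis divide_nonneg_pos fact_ge_zero mult.assoc mult_nonneg_nonneg zero_le_square)
  then show ?thesis unfolding tcontr_def by (intro sum_nonneg) auto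
qed

lemma entry_le_tnorm:
  assumes "mdeg \<alpha> = k"
  shows "\<bar>T \<alpha>\<bar> \<le> tnorm k (T::('n::finite\<Rightarrow>nat)\<Rightarrow>real)"
proof -
  have w: "1 \<le> fact k / mfact \<alpha>" using wt_ge1[of \<alpha>] assms by simp
  have nn: "\<And>x. 0 \<le> fact k / mfact x * T x * T x" using mfact_pos
    by (metis divide_nonneg_pos fact_ge_zero mult.assoc mult_nonneg_nonneg zero_le_square)
  have "T \<alpha> * T \<alpha> \<le> (fact k / mfact \<alpha>) * (T \<alpha> * T \<alpha>)"
    using mult_right_mono[OF w, of "T \<alpha> * T \<alpha>"] by simp
  also have "\<dots> \<le> tcontr k T T"
    unfolding tcontr_def using assms finite_mdeg_eq[of k] nn
    by (subst mult.assoc[symmetric], intro member_le_sum) auto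
  finally have "\<bar>T \<alpha>\<bar>^2 \<le> tcontr k T T" by (simp add: power2_eq_square)
  then show ?thesis unfolding tnorm_def using real_le_rsqrt by blast
qed

lemma mdeg_unit: "mdeg (unitmi i :: 'n::finite \<Rightarrow> nat) = 1"
  unfolding mdeg_def unitmi_def by simp

lemma mfact_add_unit:
  "mfact (\<lambda>j. \<delta> j + unitmi i j) = real (\<delta> i + 1) * mfact (\<delta>::'n::finite\<Rightarrow>nat)"
proof -
  have "mfact (\<lambda>j. \<delta> j + unitmi i j) = fact (\<delta> i + 1) * (\<Prod>j\<in>UNIV-{i}. fact (\<delta> j + unitmi i j))"
    unfolding mfact_def by (subst prod.remove[of UNIV i]) (auto simp: unitmi_def)
  also have "(\<Prod>j\<in>UNIV-{i}. fact (\<delta> j + unitmi i j)) = (\<Prod>j\<in>UNIV-{i}. fact (\<delta> j)::real)"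
    by (rule prod.cong) (auto simp: unitmi_def)
  also have "mfact \<delta> = fact (\<delta> i) * (\<Prod>j\<in>UNIV-{i}. fact (\<delta> j))"
    unfolding mfact_def by (subst prod.remove[of UNIV i]) auto
  ultimately show ?thesis by (simp add: algebra_simps)
qed

lemma multinomial:
  "(\<Sum>\<alpha>\<in>{\<alpha>::'n::finite\<Rightarrow>nat. mdeg \<alpha> = s}. fact s / mfact \<alpha>) = real CARD('n) ^ s"
proof (induction s)
  case 0
  have "{\<alpha>::'n\<Rightarrow>nat. mdeg \<alpha> = 0} = {\<lambda>_. 0}"
    unfolding mdeg_def by (auto simp: fun_eq_iff)
  then show ?case by (simp add: mfact_def)
next
  case (Suc s)
  let ?S = "{\<alpha>::'n\<Rightarrow>nat. mdeg \<alpha> = Suc s}"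
  have fin: "finite ?S" by (rule finite_mdeg_eq)
  have "(\<Sum>\<alpha>\<in>?S. fact (Suc s) / mfact \<alpha>) = (\<Sum>\<alpha>\<in>?S. \<Sum>i\<in>UNIV. real (\<alpha> i) * fact s / mfact \<alpha>)"
  proof (rule sum.cong)
    fix \<alpha> assume "\<alpha> \<in> ?S"
    then have "(\<Sum>i\<in>UNIV. real (\<alpha> i)) = real (Suc s)" unfolding mdeg_def by (simp flip: of_nat_sum)
    then have "(\<Sum>i\<in>UNIV. real (\<alpha> i) * fact s / mfact \<alpha>) = real (Suc s) * fact s / mfact \<alpha>"
      by (simp add: sum_divide_distrib[symmetric] sum_distrib_right[symmetric])
    then show "fact (Suc s) / mfact \<alpha> = (\<Sum>i\<in>UNIV. real (\<alpha> i) * fact s / mfact \<alpha>)"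
      by (simp add: fact_Suc)
  qed simp
  also have "\<dots> = (\<Sum>i\<in>UNIV. \<Sum>\<alpha>\<in>?S. real (\<alpha> i) * fact s / mfact \<alpha>)"
    by (rule sum.swap)
  also have "\<dots> = (\<Sum>i\<in>(UNIV::'n set). real CARD('n) ^ s)"
  proof (rule sum.cong[OF refl])
    fix i :: 'n
    let ?T = "{\<delta>::'n\<Rightarrow>nat. mdeg \<delta> = s}"
    let ?f = "\<lambda>\<delta>::'n\<Rightarrow>nat. \<lambda>j. \<delta> j + unitmi i j"
    have inj: "inj_on ?f ?T" by (auto simp: inj_on_def fun_eq_iff)
    have img: "?f ` ?T = {\<alpha>\<in>?S. \<alpha> i \<noteq> 0}"
    proof
      show "?f ` ?T \<subseteq> {\<alpha>\<in>?S. \<alpha> i \<noteq> 0}"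
        using mdeg_add[of _ "unitmi i"] mdeg_unit[of i] by (auto simp: unitmi_def)
    next
      show "{\<alpha>\<in>?S. \<alpha> i \<noteq> 0} \<subseteq> ?f ` ?T"
      proof
        fix \<alpha> assume a: "\<alpha> \<in> {\<alpha>\<in>?S. \<alpha> i \<noteq> 0}"
        let ?d = "\<lambda>j. \<alpha> j - unitmi i j"
        have e: "\<alpha> = ?f ?d" using a by (auto simp: fun_eq_iff unitmi_def)
        have "mdeg \<alpha> = mdeg ?d + 1" using mdeg_add[of ?d "unitmi i"] mdeg_unit[of i] e by metis
        then have "?d \<in> ?T" using a by simp
        then show "\<alpha> \<in> ?f ` ?T" by (rule image_eqI[where f="?f", OF e])
      qed
    qed
    have "(\<Sum>\<alpha>\<in>?S. real (\<alpha> i) * fact s / mfact \<alpha>) = (\<Sum>\<alpha>\<in>{\<alpha>\<in>?S. \<alpha> i \<noteq> 0}. real (\<alpha> i) * fact s / mfact \<alpha>)"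
      using fin by (intro sum.mono_neutral_right) auto
    also have "\<dots> = (\<Sum>\<delta>\<in>?T. real (?f \<delta> i) * fact s / mfact (?f \<delta>))"
      by (subst img[symmetric], rule sum.reindex[OF inj, unfolded comp_def])
    also have "\<dots> = (\<Sum>\<delta>\<in>?T. fact s / mfact \<delta>)"
    proof (rule sum.cong[OF refl])
      fix \<delta> assume "\<delta> \<in> ?T"
      have "mfact \<delta> > 0" by (rule mfact_pos)
      have u: "?f \<delta> i = \<delta> i + 1" by (simp add: unitmi_def)
      show "real (?f \<delta> i) * fact s / mfact (?f \<delta>) = fact s / mfact \<delta>"
        unfolding mfact_add_unit u using \<open>mfact \<delta> > 0\<close>
        by (simp add: divide_simps del: of_nat_Suc)
    qed
    also have "\<dots> = real CARD('n) ^ s" by (rule Suc.IH)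
    finally show "(\<Sum>\<alpha>\<in>?S. real (\<alpha> i) * fact s / mfact \<alpha>) = real CARD('n) ^ s" .
  qed
  also have "\<dots> = real CARD('n) ^ Suc s" by simp
  finally show ?case .
qed



definition e2 :: "'n \<Rightarrow> 'n \<Rightarrow> nat" where "e2 i = (\<lambda>l. unitmi i l + unitmi i l)"
definition sh :: "'n \<Rightarrow> ('n\<Rightarrow>nat) \<Rightarrow> ('n\<Rightarrow>nat) \<Rightarrow> ('n\<Rightarrow>nat)" where
  "sh i \<gamma> \<alpha> = (\<lambda>j. \<gamma> j - e2 i j + \<alpha> j)"
definition Aset :: "'n::finite \<Rightarrow> nat \<Rightarrow> ('n\<Rightarrow>nat) \<Rightarrow> ('n\<Rightarrow>nat) set" where
  "Aset i m \<gamma> = {\<alpha>. 2 \<le> mdeg \<alpha> \<and> mdeg \<alpha> \<le> m + 2 \<and> \<alpha> \<noteq> e2 i \<and> mdeg (sh i \<gamma> \<alpha>) \<le> m+2 \<and> 2 \<le> sh i \<gamma> \<alpha> i}"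
definition wt :: "('n::finite\<Rightarrow>nat) \<Rightarrow> real" where "wt \<alpha> = fact (mdeg \<alpha>) / mfact \<alpha>"
definition pd :: "(('n::finite\<Rightarrow>nat) \<Rightarrow> real) \<Rightarrow> ('n\<Rightarrow>nat) \<Rightarrow> real" where "pd p \<beta> = p \<beta> * mfact \<beta>"
definition Hf where
  "Hf abar p m i f \<gamma> = (if 2 \<le> \<gamma> i \<and> mdeg \<gamma> \<le> m+2 then
     (- pd p (\<lambda>j. \<gamma> j - e2 i j) - (\<Sum>\<alpha>\<in>Aset i m \<gamma>. wt \<alpha> * abar (mdeg \<alpha>) \<alpha> * f (sh i \<gamma> \<alpha>))) / abar 2 (e2 i)
     else 0)"
definition mu :: "nat \<Rightarrow> 'n \<Rightarrow> ('n::finite\<Rightarrow>nat) \<Rightarrow> nat" where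
  "mu m i \<gamma> = (m+3-mdeg \<gamma>)*(m+3) + \<gamma> i"
definition cc where "cc abar p m i = wfrec (Wellfounded.measure (mu m i)) (Hf abar p m i)"

lemma e2_i[simp]: "e2 i i = 2" by (simp add: e2_def unitmi_def)
lemma e2_j[simp]: "j \<noteq> i \<Longrightarrow> e2 i j = 0" by (simp add: e2_def unitmi_def)
lemma mdeg_e2: "mdeg (e2 (i::'n::finite)) = 2"
  unfolding e2_def using mdeg_add[of "unitmi i" "unitmi i"] mdeg_unit[of i] by simp
lemma mfact_e2: "mfact (e2 (i::'n::finite)) = 2"
proof -
  have "mfact (e2 i) = fact (e2 i i) * (\<Prod>j\<in>UNIV-{i}. fact (e2 i j))"
    unfolding mfact_def by (subst prod.remove[of UNIV i]) auto
  also have "(\<Prod>j\<in>UNIV-{i}. fact (e2 i j)::real) = 1" by (rule prod.neutral) auto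
  finally show ?thesis by simp
qed
lemma wt_e2: "wt (e2 (i::'n::finite)) = 1" by (simp add: wt_def mdeg_e2 mfact_e2)

lemma mdeg_minus_e2:
  assumes "2 \<le> \<gamma> i" shows "mdeg (\<lambda>j. \<gamma> j - e2 i j) + 2 = mdeg (\<gamma>::'n::finite\<Rightarrow>nat)"
proof -
  have "\<forall>j. e2 i j \<le> \<gamma> j" using assms by (metis e2_i e2_j zero_le)
  then have "mdeg (\<lambda>j. \<gamma> j - e2 i j) = mdeg \<gamma> - mdeg (e2 i)"
    unfolding mdeg_def by (simp add: sum_subtractf_nat)
  moreover have "mdeg (e2 i) \<le> mdeg \<gamma>" 
    using \<open>\<forall>j. e2 i j \<le> \<gamma> j\<close> unfolding mdeg_def by (simp add: sum_mono)
  ultimately show ?thesis using mdeg_e2[of i] by simp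
qed

lemma mdeg_sh:
  assumes "2 \<le> \<gamma> i" shows "mdeg (sh i \<gamma> \<alpha>) + 2 = mdeg (\<gamma>::'n::finite\<Rightarrow>nat) + mdeg \<alpha>"
  using mdeg_minus_e2[where \<gamma>=\<gamma> and i=i, OF assms] mdeg_add[of "\<lambda>j. \<gamma> j - e2 i j" \<alpha>] unfolding sh_def by simp

lemma sh_i: "2 \<le> \<gamma> i \<Longrightarrow> sh i \<gamma> \<alpha> i = \<gamma> i - 2 + \<alpha> i" by (simp add: sh_def)

lemma deg2_ne_e2:
  assumes "mdeg \<alpha> = 2" "\<alpha> \<noteq> e2 i" shows "\<alpha> (i::'n::finite) \<le> 1"
proof (rule ccontr)
  assume "\<not> \<alpha> i \<le> 1"
  then have ai: "\<alpha> i = 2" using le_mdeg[of \<alpha> i] assms by linarith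
  have "mdeg \<alpha> = \<alpha> i + (\<Sum>j\<in>UNIV-{i}. \<alpha> j)"
    unfolding mdeg_def by (subst sum.remove[of UNIV i]) auto
  then have "(\<Sum>j\<in>UNIV-{i}. \<alpha> j) = 0" using ai assms by simp
  then have "\<forall>j\<in>UNIV-{i}. \<alpha> j = 0" by simp
  then have "\<alpha> = e2 i" using ai by (auto simp: fun_eq_iff e2_def unitmi_def)
  then show False using assms by simp
qed

lemma finite_Aset: "finite (Aset i m \<gamma>)"
  by (rule finite_subset[OF _ finite_mdeg_le[of "m+2"]]) (auto simp: Aset_def)

lemma mu_dec:
  assumes g: "2 \<le> \<gamma> i" "mdeg \<gamma> \<le> m+2" and a: "\<alpha> \<in> Aset i m \<gamma>"
  shows "mu m i (sh i \<gamma> \<alpha>) < mu m i (\<gamma>::'n::finite\<Rightarrow>nat)"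
proof -
  let ?d = "sh i \<gamma> \<alpha>"
  have md: "mdeg ?d + 2 = mdeg \<gamma> + mdeg \<alpha>" by (rule mdeg_sh[where \<gamma>=\<gamma> and i=i, OF g(1)])
  have a2: "2 \<le> mdeg \<alpha>" "\<alpha> \<noteq> e2 i" "mdeg ?d \<le> m+2" using a by (auto simp: Aset_def)
  show ?thesis
  proof (cases "mdeg \<alpha> = 2")
    case True
    then have "\<alpha> i \<le> 1" using deg2_ne_e2 a2 by blast
    then show ?thesis using md True sh_i[where \<gamma>=\<gamma> and i=i and \<alpha>=\<alpha>, OF g(1)] g by (simp add: mu_def)
  next
    case False
    then have lt: "mdeg \<gamma> < mdeg ?d" using md a2 by linarith
    have di: "?d i \<le> m + 2" using le_mdeg[of ?d i] a2 by linarith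
    define a' where "a' = m + 2 - mdeg \<gamma>"
    have a': "m + 3 - mdeg \<gamma> = Suc a'" "m + 3 - mdeg ?d \<le> a'"
      using lt a2(3) g(2) unfolding a'_def by linarith+
    have "(m+3-mdeg ?d)*(m+3) + ?d i \<le> a'*(m+3) + (m+2)"
      using a' di by (intro add_mono mult_right_mono) auto
    also have "\<dots> < Suc a' * (m+3)" by simp
    also have "\<dots> \<le> mu m i \<gamma>" unfolding mu_def a'(1) by simp
    finally show ?thesis unfolding mu_def .
  qed
qed

lemma cc_eq: "cc abar p m i \<gamma> = Hf abar p m i (cc abar p m i) \<gamma>"
proof -
  have "cc abar p m i \<gamma> = Hf abar p m i (cut (cc abar p m i) (Wellfounded.measure (mu m i)) \<gamma>) \<gamma>"
    unfolding cc_def by (rule wfrec) simp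
  also have "\<dots> = Hf abar p m i (cc abar p m i) \<gamma>"
  proof -
    have "2 \<le> \<gamma> i \<and> mdeg \<gamma> \<le> m+2 \<Longrightarrow>
      (\<Sum>\<alpha>\<in>Aset i m \<gamma>. wt \<alpha> * abar (mdeg \<alpha>) \<alpha> * cut (cc abar p m i) (Wellfounded.measure (mu m i)) \<gamma> (sh i \<gamma> \<alpha>))
      = (\<Sum>\<alpha>\<in>Aset i m \<gamma>. wt \<alpha> * abar (mdeg \<alpha>) \<alpha> * cc abar p m i (sh i \<gamma> \<alpha>))"
      by (rule sum.cong) (auto simp: cut_apply mu_dec)
    note eq = this
    show ?thesis
    proof (cases "2 \<le> \<gamma> i \<and> mdeg \<gamma> \<le> m+2")
      case True
      show ?thesis unfolding Hf_def if_P[OF True] eq[OF True] ..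
    next
      case False
      show ?thesis unfolding Hf_def if_not_P[OF False] ..
    qed
  qed
  finally show ?thesis .
qed

lemma cc_zero: assumes "\<not> (2 \<le> \<gamma> i \<and> mdeg \<gamma> \<le> m+2)" shows "cc abar p m i \<gamma> = 0"
  by (subst cc_eq) (simp only: Hf_def if_not_P[OF assms])



lemma cc_supp: "cc abar p m i \<gamma> \<noteq> 0 \<Longrightarrow> 2 \<le> \<gamma> i \<and> mdeg \<gamma> \<le> m+2"
  using cc_zero by blast

lemma inP_finite: "in_P N c \<Longrightarrow> finite {\<beta>. c \<beta> \<noteq> 0}"
  unfolding in_P_def by (rule finite_subset[OF _ finite_mdeg_le[of N]]) (auto simp: not_less)

lemma inP_pderivm: assumes "in_P N c" shows "in_P N (pderivm \<alpha> c)"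
  unfolding in_P_def
proof (intro allI impI)
  fix \<beta> :: "'a \<Rightarrow> nat" assume "N < mdeg \<beta>"
  then have "N < mdeg (\<lambda>i. \<beta> i + \<alpha> i)" using mdeg_add[of \<beta> \<alpha>] by simp
  then have "c (\<lambda>i. \<beta> i + \<alpha> i) = 0" using assms unfolding in_P_def by blast
  then show "pderivm \<alpha> c \<beta> = 0" by (simp add: pderivm_def)
qed

lemma peval0: assumes "finite {\<beta>. c \<beta> \<noteq> 0}" shows "peval c 0 = c (\<lambda>_. 0)"
proof -
  have pr: "(\<Prod>i\<in>UNIV. ((0::real^'n) $ i) ^ \<alpha> i) = (if \<alpha> = (\<lambda>_. 0) then 1 else 0)" for \<alpha> :: "'n::finite \<Rightarrow> nat"
  proof (cases "\<alpha> = (\<lambda>_. 0)")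
    case False
    then obtain j where "\<alpha> j \<noteq> 0" by auto
    then show ?thesis using False by (intro prod_zero[THEN trans]) (auto intro!: bexI[of _ j])
  qed simp
  have "peval c 0 = (\<Sum>\<alpha>\<in>{\<beta>. c \<beta> \<noteq> 0}. if \<alpha> = (\<lambda>_. 0) then c \<alpha> else 0)"
    unfolding peval_def pr by (rule sum.cong) auto
  also have "\<dots> = (if (\<lambda>_. 0) \<in> {\<beta>. c \<beta> \<noteq> 0} then c (\<lambda>_. 0) else 0)"
    using assms by (simp add: sum.delta sum.delta')
  finally show ?thesis by auto
qed

lemma mfact0: "mfact (\<lambda>_::'n::finite. 0) = 1" by (simp add: mfact_def)

lemma grad_at0:
  assumes "in_P N c"
  shows "grad_at k c 0 \<alpha> = (if mdeg \<alpha> = k then c \<alpha> * mfact \<alpha> else 0)"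
proof -
  have "peval (pderivm \<alpha> c) 0 = pderivm \<alpha> c (\<lambda>_. 0)"
    by (rule peval0[OF inP_finite[OF inP_pderivm[OF assms]]])
  also have "\<dots> = c \<alpha> * mfact \<alpha>" by (simp add: pderivm_def mfact0)
  finally show ?thesis by (simp add: grad_at_def)
qed

lemma peval_uminus: "peval (\<lambda>\<beta>. - c \<beta>) x = - peval c x"
  unfolding peval_def by (simp add: sum_negf)

context
  fixes abar :: "nat \<Rightarrow> ('n::finite \<Rightarrow> nat) \<Rightarrow> real" and p :: "('n \<Rightarrow> nat) \<Rightarrow> real" and m :: nat and i :: 'n
  assumes inP: "in_P m p" and a11: "abar 2 (e2 i) \<noteq> 0"
begin

abbreviation "cq \<equiv> cc abar p m i"
abbreviation "q \<equiv> (\<lambda>\<gamma>. cq \<gamma> / mfact \<gamma>)"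

lemma q_inP: "in_P (m+2) q"
  unfolding in_P_def using cc_supp[of abar p m i] by fastforce

lemma sum_eq: "(\<Sum>\<alpha>\<in>{\<alpha>. 2 \<le> mdeg \<alpha> \<and> q (\<lambda>j. \<beta> j + \<alpha> j) \<noteq> 0}. wt \<alpha> * abar (mdeg \<alpha>) \<alpha> * cq (\<lambda>j. \<beta> j + \<alpha> j)) = - pd p \<beta>"
  (is "(\<Sum>\<alpha>\<in>?S1. ?f \<alpha>) = _")
proof (cases "mdeg \<beta> \<le> m")
  case True
  let ?g = "\<lambda>j. \<beta> j + e2 i j"
  have gi: "2 \<le> ?g i" by simp
  have gd: "mdeg ?g = mdeg \<beta> + 2" using mdeg_add[of \<beta> "e2 i"] mdeg_e2[of i] by simp
  have gb: "(\<lambda>j. ?g j - e2 i j) = \<beta>" by simp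
  have shg: "sh i ?g \<alpha> = (\<lambda>j. \<beta> j + \<alpha> j)" for \<alpha> by (simp add: sh_def)
  have ceq: "cq ?g = (- pd p \<beta> - (\<Sum>\<alpha>\<in>Aset i m ?g. ?f \<alpha>)) / abar 2 (e2 i)"
    apply (subst cc_eq) using gi gd True by (simp add: Hf_def shg)
  have sub: "?S1 \<subseteq> insert (e2 i) (Aset i m ?g)"
  proof
    fix \<alpha> assume a: "\<alpha> \<in> ?S1"
    then have "cq (\<lambda>j. \<beta> j + \<alpha> j) \<noteq> 0" by simp
    then have h: "2 \<le> \<beta> i + \<alpha> i" "mdeg (\<lambda>j. \<beta> j + \<alpha> j) \<le> m+2" using cc_supp[of abar p m i] by auto
    then have "mdeg \<alpha> \<le> m + 2" using mdeg_add[of \<beta> \<alpha>] by simp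
    then show "\<alpha> \<in> insert (e2 i) (Aset i m ?g)" using a h by (auto simp: Aset_def shg)
  qed
  have "(\<Sum>\<alpha>\<in>?S1. ?f \<alpha>) = (\<Sum>\<alpha>\<in>insert (e2 i) (Aset i m ?g). ?f \<alpha>)"
  proof (rule sum.mono_neutral_left[OF _ sub])
    show "finite (insert (e2 i) (Aset i m ?g))" using finite_Aset by simp
    show "\<forall>x\<in>insert (e2 i) (Aset i m ?g) - ?S1. ?f x = 0"
      using mdeg_e2[of i] mfact_pos by (auto simp: Aset_def less_le)
  qed
  also have "\<dots> = ?f (e2 i) + (\<Sum>\<alpha>\<in>Aset i m ?g. ?f \<alpha>)"
    using finite_Aset by (subst sum.insert) (auto simp: Aset_def)
  also have "?f (e2 i) = abar 2 (e2 i) * cq ?g" using wt_e2[of i] mdeg_e2[of i] by simp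
  also have "\<dots> = - pd p \<beta> - (\<Sum>\<alpha>\<in>Aset i m ?g. ?f \<alpha>)" using a11 ceq by simp
  finally show ?thesis by simp
next
  case False
  have e: "?S1 = {}"
  proof (rule ccontr)
    assume "?S1 \<noteq> {}"
    then obtain \<alpha> where a: "\<alpha> \<in> ?S1" by blast
    then have "cq (\<lambda>j. \<beta> j + \<alpha> j) \<noteq> 0" by simp
    then have "mdeg (\<lambda>j. \<beta> j + \<alpha> j) \<le> m+2" using cc_supp[of abar p m i] by auto
    then show False using mdeg_add[of \<beta> \<alpha>] a False by simp
  qed
  have "p \<beta> = 0" using inP False unfolding in_P_def by simp
  then show ?thesis unfolding e by (simp add: pd_def)
qed

lemma hom_eq: "hom_op abar q \<beta> = - p \<beta>"
proof -
  have pder: "pderivm \<alpha> q \<beta> = cq (\<lambda>j. \<beta> j + \<alpha> j) / mfact \<beta>" for \<alpha>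
    using mfact_pos[of "\<lambda>j. \<beta> j + \<alpha> j"] by (simp add: pderivm_def)
  have "hom_op abar q \<beta> = (\<Sum>\<alpha>\<in>{\<alpha>. 2 \<le> mdeg \<alpha> \<and> q (\<lambda>j. \<beta> j + \<alpha> j) \<noteq> 0}.
      wt \<alpha> * abar (mdeg \<alpha>) \<alpha> * cq (\<lambda>j. \<beta> j + \<alpha> j)) / mfact \<beta>"
    unfolding hom_op_def pder sum_divide_distrib by (simp add: wt_def)
  also have "\<dots> = - p \<beta>" unfolding sum_eq pd_def using mfact_pos[of \<beta>] by simp
  finally show ?thesis .
qed

lemma peval_eq: "- peval (hom_op abar q) x = peval p x"
proof -
  have "hom_op abar q = (\<lambda>\<beta>. - p \<beta>)" using hom_eq by auto
  then show ?thesis by (simp add: peval_uminus)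
qed

lemma q0: "peval q 0 = 0"
  by (subst peval0[OF inP_finite[OF q_inP]]) (simp add: cc_zero)

lemma dq0: "mdeg \<alpha> = 1 \<Longrightarrow> peval (pderivm \<alpha> q) 0 = 0"
proof -
  assume a: "mdeg \<alpha> = 1"
  have "\<alpha> i \<le> 1" using le_mdeg[of \<alpha> i] a by simp
  then have "cq \<alpha> = 0" by (intro cc_zero) simp
  then show ?thesis using grad_at0[OF q_inP, of 1 \<alpha>] a by (simp add: grad_at_def)
qed

end



definition bndR :: "real \<Rightarrow> (nat \<Rightarrow> real) \<Rightarrow> nat \<Rightarrow> 'n \<Rightarrow> ('n::finite\<Rightarrow>nat) \<Rightarrow> nat \<Rightarrow> real" where
  "bndR W P m i \<gamma> j0 = (\<Sum>k=j0..m. W ^ (2*(k+2-mdeg \<gamma>) + (\<gamma> i - 2)) * P k)"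

lemma bndR_nonneg: "W \<ge> 0 \<Longrightarrow> (\<And>k. P k \<ge> 0) \<Longrightarrow> bndR W P m i \<gamma> j0 \<ge> 0"
  unfolding bndR_def by (intro sum_nonneg mult_nonneg_nonneg) auto

lemma sum_by_deg:
  "(\<Sum>\<alpha>\<in>{\<alpha>::'n::finite\<Rightarrow>nat. a \<le> mdeg \<alpha> \<and> mdeg \<alpha> \<le> b}. wt \<alpha> * g (mdeg \<alpha>))
     = (\<Sum>n=a..b. real CARD('n)^n * g n)"
proof -
  let ?S = "{\<alpha>::'n\<Rightarrow>nat. a \<le> mdeg \<alpha> \<and> mdeg \<alpha> \<le> b}"
  have fin: "finite ?S" by (rule finite_subset[OF _ finite_mdeg_le[of b]]) auto
  have "(\<Sum>\<alpha>\<in>?S. wt \<alpha> * g (mdeg \<alpha>)) = (\<Sum>n\<in>{a..b}. \<Sum>\<alpha>\<in>{x\<in>?S. mdeg x = n}. wt \<alpha> * g (mdeg \<alpha>))"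
    by (rule sum.group[symmetric]) (use fin in auto)
  also have "\<dots> = (\<Sum>n=a..b. real CARD('n)^n * g n)"
  proof (rule sum.cong[OF refl])
    fix n assume "n \<in> {a..b}"
    then have e: "{x\<in>?S. mdeg x = n} = {\<alpha>. mdeg \<alpha> = n}" by auto
    have "(\<Sum>\<alpha>\<in>{\<alpha>::'n\<Rightarrow>nat. mdeg \<alpha> = n}. wt \<alpha> * g (mdeg \<alpha>)) = (\<Sum>\<alpha>\<in>{\<alpha>::'n\<Rightarrow>nat. mdeg \<alpha> = n}. wt \<alpha>) * g n"
      by (simp add: sum_distrib_right)
    also have "(\<Sum>\<alpha>\<in>{\<alpha>::'n\<Rightarrow>nat. mdeg \<alpha> = n}. wt \<alpha>) = real CARD('n)^n"
      unfolding wt_def using multinomial[of n] by (metis (mono_tags, lifting) mem_Collect_eq sum.cong)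
    finally show "(\<Sum>\<alpha>\<in>{x\<in>?S. mdeg x = n}. wt \<alpha> * g (mdeg \<alpha>)) = real CARD('n)^n * g n" unfolding e .
  qed
  finally show ?thesis .
qed

lemma geo:
  assumes "DD \<ge> (0::real)"
  shows "(\<Sum>n=3..N. DD^n / ((8*(DD+1))^3)^(n-2)) \<le> 1/4"
proof -
  have "(\<Sum>n=3..N. DD^n / ((8*(DD+1))^3)^(n-2)) \<le> (\<Sum>n=3..N. (1/8::real)^n)"
  proof (rule sum_mono)
    fix n assume n: "n \<in> {3..N}"
    have b1: "1 \<le> 8*(DD+1)" using assms by simp
    have "(8*(DD+1))^n \<le> (8*(DD+1))^(3*(n-2))" using n b1 by (intro power_increasing) auto
    also have "\<dots> = ((8*(DD+1))^3)^(n-2)" by (simp add: power_mult)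
    finally have w: "(8*(DD+1))^n \<le> ((8*(DD+1))^3)^(n-2)" .
    have pos: "0 < (8*(DD+1))^n" using assms by simp
    have h1: "DD^n / ((8*(DD+1))^3)^(n-2) \<le> (DD+1)^n / (8*(DD+1))^n"
      using assms w pos by (intro frac_le power_mono) auto
    have h2: "(DD+1) / (8*(DD+1)) = (1/8::real)" using assms by (simp add: field_simps)
    have h3: "(DD+1)^n / (8*(DD+1))^n = ((DD+1) / (8*(DD+1)))^n" by (simp add: power_divide)
    show "DD^n / ((8*(DD+1))^3)^(n-2) \<le> (1/8)^n" using h1 unfolding h3 h2 .
  qed
  also have "(\<Sum>n=3..N. (1/8::real)^n) \<le> 1/4"
  proof (cases "N < 3")
    case True then show ?thesis by simp
  next
    case False
    have "(\<Sum>n=3..N. (1/8::real)^n) = ((1/8)^3 - (1/8)^Suc N) / (1 - 1/8)"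
      using False by (subst sum_gp) auto
    also have "\<dots> \<le> ((1/8)^3) / (1 - 1/8)" by (intro divide_right_mono) auto
    also have "\<dots> \<le> 1/4" by (simp add: power3_eq_cube)
    finally show ?thesis .
  qed
  finally show ?thesis .
qed

context
  fixes abar :: "nat \<Rightarrow> ('n::finite \<Rightarrow> nat) \<Rightarrow> real" and p :: "('n \<Rightarrow> nat) \<Rightarrow> real"
    and m :: nat and i :: 'n and K :: real and dd :: real and DD WW :: real and PP :: "nat \<Rightarrow> real"
  assumes dd: "dd = real CARD('n)" and DD_def: "DD = dd * K" and WW_def: "WW = (8*(DD+1))^3"
    and PP_def: "PP = (\<lambda>k. tnorm k (grad_at k p 0))"
    and inP: "in_P m p" and a11: "1 \<le> abar 2 (e2 i)"
    and hab: "\<And>\<alpha>. \<bar>abar (mdeg \<alpha>) \<alpha>\<bar> \<le> K ^ mdeg \<alpha>" and K0: "0 \<le> K"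
begin

abbreviation "ccq \<equiv> cc abar p m i"
abbreviation "bnd \<equiv> bndR WW PP m i"

lemma DD0: "0 \<le> DD" using K0 dd DD_def by simp

lemma WW2: "2 \<le> WW"
proof -
  have "8 \<le> 8*(DD+1)" using DD0 by simp
  then have "8^3 \<le> (8*(DD+1))^3" by (rule power_mono) simp
  then show ?thesis unfolding WW_def by simp
qed

lemma WWD: "4*DD^2 \<le> WW"
proof -
  have "DD^2 \<le> (DD+1)^2" using DD0 by (intro power_mono) auto
  also have "\<dots> \<le> (DD+1)^3" using DD0 by (intro power_increasing) auto
  finally have h: "DD^2 \<le> (DD+1)^3" .
  have "0 \<le> (DD+1)^3" using DD0 by simp
  then have "4*DD^2 \<le> 512*(DD+1)^3" using h by linarith
  moreover have "(8*(DD+1))^3 = 512*(DD+1)^3" by (simp only: power_mult_distrib) simp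
  ultimately show ?thesis unfolding WW_def by linarith
qed

lemma PP0: "0 \<le> PP k" unfolding PP_def tnorm_def using tcontr_nonneg by simp

lemma bnd0: "0 \<le> bnd \<gamma> j0"
  using WW2 PP0 by (intro bndR_nonneg) auto

lemma pd_le: "\<bar>pd p \<beta>\<bar> \<le> PP (mdeg \<beta>)"
proof -
  have "pd p \<beta> = grad_at (mdeg \<beta>) p 0 \<beta>" using grad_at0[OF inP] by (simp add: pd_def)
  then show ?thesis using entry_le_tnorm[of \<beta> "mdeg \<beta>"] unfolding PP_def by simp
qed

lemma bnd_split:
  assumes "mdeg \<gamma> \<le> m + 2" "2 \<le> mdeg \<gamma>"
  shows "bnd \<gamma> (mdeg \<gamma> - 2) = WW^(\<gamma> i - 2) * PP (mdeg \<gamma> - 2) + bnd \<gamma> (mdeg \<gamma> - 1)"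
proof -
  have e: "{mdeg \<gamma> - 2..m} = insert (mdeg \<gamma> - 2) {mdeg \<gamma> - 1..m}" using assms by auto
  show ?thesis unfolding bndR_def e using assms by (subst sum.insert) auto
qed


lemma bnd_shift2:
  assumes g: "2 \<le> \<gamma> i" and d: "mdeg \<delta> = mdeg \<gamma>" and di: "2 \<le> \<delta> i" "\<delta> i < \<gamma> i"
  shows "bnd \<delta> (mdeg \<delta> - 2) * WW \<le> bnd \<gamma> (mdeg \<gamma> - 2)"
  unfolding bndR_def d sum_distrib_right
proof (rule sum_mono)
  fix k assume "k \<in> {mdeg \<gamma> - 2..m}"
  have "WW ^ (2 * (k + 2 - mdeg \<gamma>) + (\<delta> i - 2)) * WW = WW ^ (2 * (k + 2 - mdeg \<gamma>) + (\<delta> i - 2) + 1)"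
    by simp
  also have "\<dots> \<le> WW ^ (2 * (k + 2 - mdeg \<gamma>) + (\<gamma> i - 2))"
    using WW2 di by (intro power_increasing) auto
  finally have h: "WW ^ (2 * (k + 2 - mdeg \<gamma>) + (\<delta> i - 2)) * WW * PP k \<le> WW ^ (2 * (k + 2 - mdeg \<gamma>) + (\<gamma> i - 2)) * PP k"
    by (rule mult_right_mono[OF _ PP0])
  have "WW ^ (2 * (k + 2 - mdeg \<gamma>) + (\<delta> i - 2)) * PP k * WW = WW ^ (2 * (k + 2 - mdeg \<gamma>) + (\<delta> i - 2)) * WW * PP k"
    by (simp add: ac_simps)
  with h show "WW ^ (2 * (k + 2 - mdeg \<gamma>) + (\<delta> i - 2)) * PP k * WW \<le> WW ^ (2 * (k + 2 - mdeg \<gamma>) + (\<gamma> i - 2)) * PP k"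
    by linarith
qed

lemma bnd_shift3:
  assumes g: "2 \<le> \<gamma> i" and n: "3 \<le> n" and d: "mdeg \<delta> + 2 = mdeg \<gamma> + n" and di: "\<delta> i + 2 \<le> \<gamma> i + n"
    and gd: "2 \<le> mdeg \<gamma>"
  shows "bnd \<delta> (mdeg \<delta> - 2) * WW^(n-2) \<le> bnd \<gamma> (mdeg \<gamma> - 1)"
proof -
  have "bnd \<delta> (mdeg \<delta> - 2) * WW^(n-2) = (\<Sum>k=mdeg \<delta> - 2..m. WW ^ (2*(k+2-mdeg \<delta>) + (\<delta> i - 2)) * PP k * WW^(n-2))"
    unfolding bndR_def sum_distrib_right ..
  also have "\<dots> \<le> (\<Sum>k=mdeg \<delta> - 2..m. WW ^ (2*(k+2-mdeg \<gamma>) + (\<gamma> i - 2)) * PP k)"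
  proof (rule sum_mono)
    fix k assume k: "k \<in> {mdeg \<delta> - 2..m}"
    have "WW ^ (2*(k+2-mdeg \<delta>) + (\<delta> i - 2)) * WW^(n-2) = WW ^ (2*(k+2-mdeg \<delta>) + (\<delta> i - 2) + (n-2))"
      by (simp add: power_add)
    also have "\<dots> \<le> WW ^ (2*(k+2-mdeg \<gamma>) + (\<gamma> i - 2))"
      using WW2 k d di n g by (intro power_increasing) auto
    finally have h: "WW ^ (2*(k+2-mdeg \<delta>) + (\<delta> i - 2)) * WW^(n-2) * PP k \<le> WW ^ (2*(k+2-mdeg \<gamma>) + (\<gamma> i - 2)) * PP k"
      by (rule mult_right_mono[OF _ PP0])
    have "WW ^ (2*(k+2-mdeg \<delta>) + (\<delta> i - 2)) * PP k * WW^(n-2) = WW ^ (2*(k+2-mdeg \<delta>) + (\<delta> i - 2)) * WW^(n-2) * PP k"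
      by (simp add: ac_simps)
    with h show "WW ^ (2*(k+2-mdeg \<delta>) + (\<delta> i - 2)) * PP k * WW^(n-2) \<le> WW ^ (2*(k+2-mdeg \<gamma>) + (\<gamma> i - 2)) * PP k"
      by linarith
  qed
  also have "\<dots> \<le> bnd \<gamma> (mdeg \<gamma> - 1)"
    unfolding bndR_def using d n WW2 PP0
    by (intro sum_mono2) auto
  finally show ?thesis .
qed


lemma cc_bound: "\<bar>ccq \<gamma>\<bar> \<le> bnd \<gamma> (mdeg \<gamma> - 2)"
proof (induction \<gamma> rule: measure_induct_rule[of "mu m i"])
  case (less \<gamma>)
  show ?case
  proof (cases "2 \<le> \<gamma> i \<and> mdeg \<gamma> \<le> m+2")
    case False
    then show ?thesis using cc_zero[OF False] bnd0 by simp
  next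
    case True
    let ?s = "mdeg \<gamma>" and ?t = "\<gamma> i"
    let ?\<beta> = "\<lambda>j. \<gamma> j - e2 i j"
    let ?A = "Aset i m \<gamma>"
    let ?f = "\<lambda>\<alpha>. wt \<alpha> * abar (mdeg \<alpha>) \<alpha> * ccq (sh i \<gamma> \<alpha>)"
    have t2: "2 \<le> ?t" and sm: "?s \<le> m+2" using True by auto
    have s2: "2 \<le> ?s" using le_mdeg[of \<gamma> i] t2 by linarith
    have mb: "mdeg ?\<beta> = ?s - 2" using mdeg_minus_e2[where \<gamma>=\<gamma> and i=i, OF t2] by simp
    have ceq: "ccq \<gamma> = (- pd p ?\<beta> - (\<Sum>\<alpha>\<in>?A. ?f \<alpha>)) / abar 2 (e2 i)"
      by (subst cc_eq) (simp only: Hf_def if_P[OF True])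
    have IH: "\<bar>ccq (sh i \<gamma> \<alpha>)\<bar> \<le> bnd (sh i \<gamma> \<alpha>) (mdeg (sh i \<gamma> \<alpha>) - 2)" if "\<alpha> \<in> ?A" for \<alpha>
      using less mu_dec[OF t2 sm that] by blast
    have wt0: "0 \<le> wt \<alpha>" for \<alpha> using mfact_pos[of \<alpha>] by (simp add: wt_def)
    have finA: "finite ?A" by (rule finite_Aset)
    have "\<bar>ccq \<gamma>\<bar> \<le> \<bar>- pd p ?\<beta> - (\<Sum>\<alpha>\<in>?A. ?f \<alpha>)\<bar>"
    proof -
      have "\<bar>ccq \<gamma>\<bar> = \<bar>- pd p ?\<beta> - (\<Sum>\<alpha>\<in>?A. ?f \<alpha>)\<bar> / abar 2 (e2 i)"
        using ceq a11 by (simp add: abs_divide)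
      also have "\<dots> \<le> \<bar>- pd p ?\<beta> - (\<Sum>\<alpha>\<in>?A. ?f \<alpha>)\<bar>"
        using a11 mult_left_mono[of 1 "abar 2 (e2 i)" "\<bar>- pd p ?\<beta> - (\<Sum>\<alpha>\<in>?A. ?f \<alpha>)\<bar>"]
        by (simp add: divide_le_eq)
      finally show ?thesis .
    qed
    also have "\<dots> \<le> \<bar>pd p ?\<beta>\<bar> + (\<Sum>\<alpha>\<in>?A. \<bar>?f \<alpha>\<bar>)"
      using sum_abs[of ?f ?A] by linarith
    also have "(\<Sum>\<alpha>\<in>?A. \<bar>?f \<alpha>\<bar>) = (\<Sum>\<alpha>\<in>?A \<inter> {\<alpha>. mdeg \<alpha> = 2}. \<bar>?f \<alpha>\<bar>) + (\<Sum>\<alpha>\<in>?A - {\<alpha>. mdeg \<alpha> = 2}. \<bar>?f \<alpha>\<bar>)"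
      by (rule sum.Int_Diff[OF finA])
    finally have step1: "\<bar>ccq \<gamma>\<bar> \<le> \<bar>pd p ?\<beta>\<bar> + (\<Sum>\<alpha>\<in>?A \<inter> {\<alpha>. mdeg \<alpha> = 2}. \<bar>?f \<alpha>\<bar>) + (\<Sum>\<alpha>\<in>?A - {\<alpha>. mdeg \<alpha> = 2}. \<bar>?f \<alpha>\<bar>)"
      by linarith
    have A2: "(\<Sum>\<alpha>\<in>?A \<inter> {\<alpha>. mdeg \<alpha> = 2}. \<bar>?f \<alpha>\<bar>) \<le> (if ?t = 2 then 0 else bnd \<gamma> (?s - 2) / 4)"
    proof (cases "?t = 2")
      case True
      have "?A \<inter> {\<alpha>. mdeg \<alpha> = 2} = {}"
      proof (rule ccontr)
        assume "?A \<inter> {\<alpha>. mdeg \<alpha> = 2} \<noteq> {}"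
        then obtain \<alpha> where a: "\<alpha> \<in> ?A" "mdeg \<alpha> = 2" by blast
        then have "\<alpha> i \<le> 1" using deg2_ne_e2[of \<alpha> i] by (auto simp: Aset_def)
        moreover have "2 \<le> sh i \<gamma> \<alpha> i" using a by (auto simp: Aset_def)
        ultimately show False using sh_i[where \<gamma>=\<gamma> and i=i and \<alpha>=\<alpha>, OF t2] True by simp
      qed
      then show ?thesis using True by simp
    next
      case False
      have each: "\<bar>?f \<alpha>\<bar> \<le> wt \<alpha> * (K^2 * (bnd \<gamma> (?s - 2) / WW))" if a: "\<alpha> \<in> ?A \<inter> {\<alpha>. mdeg \<alpha> = 2}" for \<alpha>
      proof -
        let ?d = "sh i \<gamma> \<alpha>"
        have aA: "\<alpha> \<in> ?A" and a2: "mdeg \<alpha> = 2" using a by auto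
        have ai: "\<alpha> i \<le> 1" using deg2_ne_e2[of \<alpha> i] a by (auto simp: Aset_def)
        have dd2: "2 \<le> ?d i" using aA by (auto simp: Aset_def)
        have ddi: "?d i < ?t" using ai sh_i[where \<gamma>=\<gamma> and i=i and \<alpha>=\<alpha>, OF t2] t2 by simp
        have dm: "mdeg ?d = ?s" using mdeg_sh[where \<gamma>=\<gamma> and i=i and \<alpha>=\<alpha>, OF t2] a2 by simp
        have h1: "bnd ?d (mdeg ?d - 2) * WW \<le> bnd \<gamma> (?s - 2)"
          by (rule bnd_shift2[OF t2 dm dd2 ddi])
        have "\<bar>ccq ?d\<bar> * WW \<le> bnd ?d (mdeg ?d - 2) * WW"
          using IH[OF aA] WW2 by (intro mult_right_mono) auto
        then have "\<bar>ccq ?d\<bar> * WW \<le> bnd \<gamma> (?s - 2)" using h1 by linarith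
        then have b: "\<bar>ccq ?d\<bar> \<le> bnd \<gamma> (?s - 2) / WW"
          using WW2 by (simp add: le_divide_eq)
        have ab: "\<bar>abar (mdeg \<alpha>) \<alpha>\<bar> \<le> K^2" using hab[of \<alpha>] a2 by simp
        have "\<bar>?f \<alpha>\<bar> = wt \<alpha> * (\<bar>abar (mdeg \<alpha>) \<alpha>\<bar> * \<bar>ccq ?d\<bar>)"
          using wt0[of \<alpha>] by (simp add: abs_mult)
        also have "\<dots> \<le> wt \<alpha> * (K^2 * (bnd \<gamma> (?s - 2) / WW))"
          using ab b wt0[of \<alpha>] by (intro mult_left_mono mult_mono) auto
        finally show ?thesis .
      qed
      have F2: "finite {\<alpha>::'n\<Rightarrow>nat. 2 \<le> mdeg \<alpha> \<and> mdeg \<alpha> \<le> 2}"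
          by (rule finite_subset[OF _ finite_mdeg_le[of "2"]]) auto
      have S2: "?A \<inter> {\<alpha>. mdeg \<alpha> = 2} \<subseteq> {\<alpha>::'n\<Rightarrow>nat. 2 \<le> mdeg \<alpha> \<and> mdeg \<alpha> \<le> 2}"
          by auto
      have N2: "\<And>b. b \<in> {\<alpha>::'n\<Rightarrow>nat. 2 \<le> mdeg \<alpha> \<and> mdeg \<alpha> \<le> 2} - (?A \<inter> {\<alpha>. mdeg \<alpha> = 2}) \<Longrightarrow> 0 \<le> wt b * (K^2 * (bnd \<gamma> (?s - 2) / WW))"
          using wt0 bnd0 WW2 by (auto intro!: mult_nonneg_nonneg divide_nonneg_nonneg)
      have "(\<Sum>\<alpha>\<in>?A \<inter> {\<alpha>. mdeg \<alpha> = 2}. \<bar>?f \<alpha>\<bar>) \<le> (\<Sum>\<alpha>\<in>?A \<inter> {\<alpha>. mdeg \<alpha> = 2}. wt \<alpha> * (K^2 * (bnd \<gamma> (?s - 2) / WW)))"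
        by (rule sum_mono[OF each])
      also have "(\<Sum>\<alpha>\<in>?A \<inter> {\<alpha>. mdeg \<alpha> = 2}. wt \<alpha> * (K^2 * (bnd \<gamma> (?s - 2) / WW))) \<le> (\<Sum>\<alpha>\<in>{\<alpha>::'n\<Rightarrow>nat. 2 \<le> mdeg \<alpha> \<and> mdeg \<alpha> \<le> 2}. wt \<alpha> * (K^2 * (bnd \<gamma> (?s - 2) / WW)))"
        by (rule sum_mono2[OF F2 S2 N2])
      also have "\<dots> = (\<Sum>n=2..2. dd^n * (K^2 * (bnd \<gamma> (?s - 2) / WW)))"
        using sum_by_deg[where a=2 and b=2 and g="\<lambda>_. K^2 * (bnd \<gamma> (?s - 2) / WW)"] dd by simp
      also have "\<dots> = DD^2 * bnd \<gamma> (?s - 2) / WW" by (simp add: DD_def power_mult_distrib)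
      also have "\<dots> \<le> (WW/4) * bnd \<gamma> (?s - 2) / WW"
        using WWD bnd0 WW2 by (intro divide_right_mono mult_right_mono) auto
      also have "\<dots> = bnd \<gamma> (?s - 2) / 4" using WW2 by simp
      finally show ?thesis using False by simp
    qed
    have A3: "(\<Sum>\<alpha>\<in>?A - {\<alpha>. mdeg \<alpha> = 2}. \<bar>?f \<alpha>\<bar>) \<le> bnd \<gamma> (?s - 1) / 4"
    proof -
      let ?B = "bnd \<gamma> (?s - 1)"
      have B0: "0 \<le> ?B" by (rule bnd0)
      have each: "\<bar>?f \<alpha>\<bar> \<le> wt \<alpha> * (K^mdeg \<alpha> / WW^(mdeg \<alpha> - 2) * ?B)" if a: "\<alpha> \<in> ?A - {\<alpha>. mdeg \<alpha> = 2}" for \<alpha>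
      proof -
        let ?d = "sh i \<gamma> \<alpha>" and ?n = "mdeg \<alpha>"
        have aA: "\<alpha> \<in> ?A" and n3: "3 \<le> ?n" using a by (auto simp: Aset_def)
        have dm: "mdeg ?d + 2 = ?s + ?n" by (rule mdeg_sh[where \<gamma>=\<gamma> and i=i, OF t2])
        have ddi: "?d i + 2 \<le> ?t + ?n" using sh_i[where \<gamma>=\<gamma> and i=i and \<alpha>=\<alpha>, OF t2] le_mdeg[of \<alpha> i] t2 by simp
        have h1: "bnd ?d (mdeg ?d - 2) * WW^(?n-2) \<le> ?B"
          by (rule bnd_shift3[OF t2 n3 dm ddi s2])
        have "\<bar>ccq ?d\<bar> * WW^(?n-2) \<le> bnd ?d (mdeg ?d - 2) * WW^(?n-2)"
          using IH[OF aA] WW2 by (intro mult_right_mono) auto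
        then have "\<bar>ccq ?d\<bar> * WW^(?n-2) \<le> ?B" using h1 by linarith
        moreover have "0 < WW^(?n-2)" using WW2 by simp
        ultimately have b: "\<bar>ccq ?d\<bar> \<le> ?B / WW^(?n-2)"
          by (simp add: le_divide_eq)
        have ab: "\<bar>abar (mdeg \<alpha>) \<alpha>\<bar> \<le> K^?n" using hab[of \<alpha>] by simp
        have "\<bar>?f \<alpha>\<bar> = wt \<alpha> * (\<bar>abar (mdeg \<alpha>) \<alpha>\<bar> * \<bar>ccq ?d\<bar>)"
          using wt0[of \<alpha>] by (simp add: abs_mult)
        also have "\<dots> \<le> wt \<alpha> * (K^?n * (?B / WW^(?n-2)))"
          using ab b wt0[of \<alpha>] by (intro mult_left_mono mult_mono) auto
        finally show ?thesis by simp
      qed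
      have "(\<Sum>\<alpha>\<in>?A - {\<alpha>. mdeg \<alpha> = 2}. \<bar>?f \<alpha>\<bar>) \<le> (\<Sum>\<alpha>\<in>?A - {\<alpha>. mdeg \<alpha> = 2}. wt \<alpha> * (K^mdeg \<alpha> / WW^(mdeg \<alpha> - 2) * ?B))"
        by (rule sum_mono[OF each])
      also have "\<dots> \<le> (\<Sum>\<alpha>\<in>{\<alpha>::'n\<Rightarrow>nat. 3 \<le> mdeg \<alpha> \<and> mdeg \<alpha> \<le> m+2}. wt \<alpha> * (K^mdeg \<alpha> / WW^(mdeg \<alpha> - 2) * ?B))"
      proof (rule sum_mono2)
        show "finite {\<alpha>::'n\<Rightarrow>nat. 3 \<le> mdeg \<alpha> \<and> mdeg \<alpha> \<le> m+2}"
          by (rule finite_subset[OF _ finite_mdeg_le[of "m+2"]]) auto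
        show "?A - {\<alpha>. mdeg \<alpha> = 2} \<subseteq> {\<alpha>. 3 \<le> mdeg \<alpha> \<and> mdeg \<alpha> \<le> m+2}"
          by (auto simp: Aset_def)
        show "0 \<le> wt b * (K^mdeg b / WW^(mdeg b - 2) * ?B)" for b
          using wt0 B0 K0 WW2 by (auto intro!: mult_nonneg_nonneg divide_nonneg_nonneg)
      qed
      also have "\<dots> = (\<Sum>n=3..m+2. dd^n * (K^n / WW^(n - 2) * ?B))"
        using sum_by_deg[where a=3 and b="m+2" and g="\<lambda>n. K^n / WW^(n - 2) * ?B"] dd by simp
      also have "\<dots> = (\<Sum>n=3..m+2. DD^n / WW^(n - 2)) * ?B"
        unfolding sum_distrib_right by (rule sum.cong) (simp_all add: DD_def power_mult_distrib)
      also have "\<dots> \<le> (1/4) * ?B"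
        using geo[OF DD0, of "m+2"] B0 unfolding WW_def by (intro mult_right_mono) auto
      finally show ?thesis by simp
    qed
    have pdl: "\<bar>pd p ?\<beta>\<bar> \<le> PP (?s - 2)" using pd_le[of ?\<beta>] mb by simp
    have split: "bnd \<gamma> (?s - 2) = WW^(?t - 2) * PP (?s - 2) + bnd \<gamma> (?s - 1)"
      by (rule bnd_split[OF sm s2])
    have B10: "0 \<le> bnd \<gamma> (?s - 1)" by (rule bnd0)
    show ?thesis
    proof (cases "?t = 2")
      case True
      then have "\<bar>ccq \<gamma>\<bar> \<le> PP (?s - 2) + 0 + bnd \<gamma> (?s - 1) / 4"
        using step1 A2 A3 pdl by simp
      then show ?thesis using split True B10 by simp
    next
      case False
      have "WW^1 \<le> WW^(?t - 2)" using False t2 WW2 by (intro power_increasing) auto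
      then have "2 * PP (?s - 2) \<le> WW^(?t - 2) * PP (?s - 2)"
        using WW2 PP0[of "?s - 2"] by (intro mult_right_mono) auto
      moreover have "\<bar>ccq \<gamma>\<bar> \<le> PP (?s - 2) + bnd \<gamma> (?s - 2) / 4 + bnd \<gamma> (?s - 1) / 4"
        using step1 A2 A3 pdl False by simp
      ultimately show ?thesis using split B10 PP0[of "?s - 2"] by linarith
    qed
  qed
qed


lemma dd1: "1 \<le> dd" using dd by (simp add: Suc_leI)

lemma final_bound:
  assumes a11': "abar 2 (e2 i) \<noteq> 0" and nm: "n \<le> m"
  shows "tnorm (n+2) (grad_at (n+2) (\<lambda>\<gamma>. ccq \<gamma> / mfact \<gamma>) 0)
     \<le> (\<Sum>k=n..m. (dd^3 * WW^2)^k * PP k)"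
proof -
  let ?q = "\<lambda>\<gamma>. ccq \<gamma> / mfact \<gamma>"
  let ?G = "grad_at (n+2) ?q 0"
  have Gk: "grad_at k ?q 0 \<alpha> = (if mdeg \<alpha> = k then ccq \<alpha> else 0)" for k \<alpha>
    using grad_at0[OF q_inP[where abar=abar and i=i and m=m and p=p, OF inP a11'], of k \<alpha>] mfact_pos[of \<alpha>] by simp
  have G: "?G \<alpha> = (if mdeg \<alpha> = n+2 then ccq \<alpha> else 0)" for \<alpha> by (rule Gk)
  have WW1: "1 \<le> WW" using WW2 by simp
  have Cge: "WW^(2*k) \<le> (dd^3 * WW^2)^k" for k
  proof -
    have "1 \<le> (dd^3)^k" by (intro one_le_power dd1)
    then have "1 * (WW^2)^k \<le> (dd^3)^k * (WW^2)^k" using WW2 by (intro mult_right_mono) auto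
    then show ?thesis by (simp add: power_mult power_mult_distrib)
  qed
  show ?thesis
  proof (cases "n = 0")
    case True
    let ?G2 = "grad_at 2 ?q 0"
    have tc: "tcontr 2 ?G2 ?G2 = (ccq (e2 i))^2"
    proof -
      have "tcontr 2 ?G2 ?G2 = (\<Sum>\<alpha>\<in>{\<alpha>. mdeg \<alpha> = 2}. if \<alpha> = e2 i then (ccq (e2 i))^2 else 0)"
        unfolding tcontr_def
      proof (rule sum.cong[OF refl])
        fix \<alpha> assume a: "\<alpha> \<in> {\<alpha>::'n\<Rightarrow>nat. mdeg \<alpha> = 2}"
        show "fact 2 / mfact \<alpha> * ?G2 \<alpha> * ?G2 \<alpha> = (if \<alpha> = e2 i then (ccq (e2 i))^2 else 0)"
        proof (cases "\<alpha> = e2 i")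
          case True then show ?thesis using a Gk[of 2 \<alpha>] mfact_e2[of i] mdeg_e2[of i]
            by (simp add: power2_eq_square)
        next
          case False
          then have "\<alpha> i \<le> 1" using deg2_ne_e2[of \<alpha> i] a by simp
          then have "ccq \<alpha> = 0" by (intro cc_zero) simp
          then show ?thesis using False Gk[of 2 \<alpha>] by simp
        qed
      qed
      also have "\<dots> = (if e2 i \<in> {\<alpha>::'n\<Rightarrow>nat. mdeg \<alpha> = 2} then (ccq (e2 i))^2 else 0)"
        by (rule sum.delta[OF finite_mdeg_eq])
      also have "\<dots> = (ccq (e2 i))^2" using mdeg_e2[of i] by simp
      finally show ?thesis .
    qed
    have n2: "n + 2 = 2" using True by simp
    have "tnorm (n+2) ?G = tnorm 2 ?G2" unfolding n2 ..
    also have "\<dots> = \<bar>ccq (e2 i)\<bar>" unfolding tnorm_def tc by simp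
    also have "\<dots> \<le> bnd (e2 i) (mdeg (e2 i) - 2)" by (rule cc_bound)
    also have "\<dots> = (\<Sum>k=0..m. WW^(2*k) * PP k)" unfolding bndR_def mdeg_e2 by simp
    also have "\<dots> \<le> (\<Sum>k=0..m. (dd^3 * WW^2)^k * PP k)"
      using Cge PP0 by (intro sum_mono mult_right_mono) auto
    finally show ?thesis using True by simp
  next
    case False
    let ?B = "\<Sum>k=n..m. WW^(2*k) * PP k"
    have B0: "0 \<le> ?B" using PP0 WW2 by (intro sum_nonneg mult_nonneg_nonneg) auto
    have cb: "\<bar>ccq \<alpha>\<bar> \<le> ?B" if a: "mdeg \<alpha> = n+2" for \<alpha>
    proof -
      have e: "n + 2 - 2 = n" by simp
      have "\<bar>ccq \<alpha>\<bar> \<le> bnd \<alpha> (mdeg \<alpha> - 2)" by (rule cc_bound)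
      also have "\<dots> \<le> ?B" unfolding bndR_def a e
      proof (rule sum_mono)
        fix k assume k: "k \<in> {n..m}"
        have "\<alpha> i \<le> n + 2" using le_mdeg[of \<alpha> i] a by simp
        then have "2 * (k + 2 - (n + 2)) + (\<alpha> i - 2) \<le> 2*k" using k by auto
        then have "WW ^ (2 * (k + 2 - (n + 2)) + (\<alpha> i - 2)) \<le> WW^(2*k)"
          using WW1 by (intro power_increasing) auto
        then show "WW ^ (2 * (k + 2 - (n + 2)) + (\<alpha> i - 2)) * PP k \<le> WW^(2*k) * PP k"
          using PP0 by (intro mult_right_mono) auto
      qed
      finally show ?thesis .
    qed
    have "tcontr (n+2) ?G ?G \<le> (\<Sum>\<alpha>\<in>{\<alpha>::'n\<Rightarrow>nat. mdeg \<alpha> = n+2}. fact (n+2) / mfact \<alpha> * ?B^2)"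
      unfolding tcontr_def
    proof (rule sum_mono)
      fix \<alpha> assume a: "\<alpha> \<in> {\<alpha>::'n\<Rightarrow>nat. mdeg \<alpha> = n+2}"
      have "?G \<alpha> * ?G \<alpha> = \<bar>ccq \<alpha>\<bar>^2" using G[of \<alpha>] a by (simp add: power2_eq_square)
      also have "\<dots> \<le> ?B^2" using cb[of \<alpha>] a by (intro power_mono) auto
      finally have "?G \<alpha> * ?G \<alpha> \<le> ?B^2" .
      moreover have "0 \<le> fact (n+2) / mfact \<alpha>" using mfact_pos[of \<alpha>] by simp
      ultimately have "fact (n+2) / mfact \<alpha> * (?G \<alpha> * ?G \<alpha>) \<le> fact (n+2) / mfact \<alpha> * ?B^2"
        by (rule mult_left_mono)
      then show "fact (n+2) / mfact \<alpha> * ?G \<alpha> * ?G \<alpha> \<le> fact (n+2) / mfact \<alpha> * ?B^2"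
        by (simp only: mult.assoc)
    qed
    also have "\<dots> = (\<Sum>\<alpha>\<in>{\<alpha>::'n\<Rightarrow>nat. mdeg \<alpha> = n+2}. fact (n+2) / mfact \<alpha>) * ?B^2"
      by (rule sum_distrib_right[symmetric])
    also have "\<dots> = dd^(n+2) * ?B^2"
      unfolding multinomial dd ..
    also have "\<dots> \<le> (dd^(n+2) * ?B)^2"
    proof -
      have "1 \<le> dd^(n+2)" by (rule one_le_power[OF dd1])
      then have "dd^(n+2) * 1 \<le> dd^(n+2) * dd^(n+2)" by (intro mult_left_mono) auto
      then have "dd^(n+2) * ?B^2 \<le> (dd^(n+2) * dd^(n+2)) * ?B^2"
        using B0 by (intro mult_right_mono) auto
      then show ?thesis by (simp add: power2_eq_square algebra_simps)
    qed
    finally have T: "tcontr (n+2) ?G ?G \<le> (dd^(n+2) * ?B)^2" .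
    have nn: "0 \<le> dd^(n+2) * ?B" using B0 dd1 by simp
    have "tnorm (n+2) ?G \<le> sqrt ((dd^(n+2) * ?B)^2)"
      unfolding tnorm_def by (rule real_sqrt_le_mono[OF T])
    also have "\<dots> = dd^(n+2) * ?B" using nn by simp
    finally have "tnorm (n+2) ?G \<le> dd^(n+2) * ?B" .
    also have "dd^(n+2) * ?B = (\<Sum>k=n..m. dd^(n+2) * WW^(2*k) * PP k)"
      by (simp add: sum_distrib_left mult.assoc)
    also have "\<dots> \<le> (\<Sum>k=n..m. (dd^3 * WW^2)^k * PP k)"
    proof (rule sum_mono)
      fix k assume k: "k \<in> {n..m}"
      have "dd^(n+2) \<le> dd^(3*k)" using dd1 k False by (intro power_increasing) auto
      then have "dd^(n+2) * WW^(2*k) \<le> dd^(3*k) * WW^(2*k)" using WW2 by (intro mult_right_mono) auto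
      also have "\<dots> = (dd^3 * WW^2)^k" by (simp add: power_mult power_mult_distrib)
      finally show "dd^(n+2) * WW^(2*k) * PP k \<le> (dd^3 * WW^2)^k * PP k"
        using PP0 by (intro mult_right_mono) auto
    qed
    finally show ?thesis .
  qed
qed

end



lemma bilin_axis: "bilin M (axis i (1::real)) (axis i 1) = M i (i::'n::finite)"
proof -
  have e: "(axis i (1::real)) $ a * M a b * (axis i 1) $ b = (if a = i then (if b = i then M a b else 0) else 0)" for a b
    by (simp add: axis_def)
  have inner: "(\<Sum>j\<in>UNIV. if a = i then (if j = i then M a j else 0) else 0) = (if a = i then M a i else (0::real))" for a
    by (cases "a = i") (simp_all add: sum.delta)
  have "(\<Sum>a\<in>(UNIV::'n set). if a = i then M a i else 0) = M i i"
    by (subst sum.delta) auto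
  then show ?thesis unfolding bilin_def e inner .
qed

theorem lemma2p3:
  fixes \<Lambda> K :: real
  assumes "\<Lambda> \<ge> 1"
  shows "\<exists>C::real. \<forall>abar :: nat \<Rightarrow> ('n::finite \<Rightarrow> nat) \<Rightarrow> real.
    unif_elliptic \<Lambda> (tmat (abar 2)) \<and> (\<forall>k. tnorm k (abar k) \<le> K ^ k) \<longrightarrow>
    (\<forall>m p. in_P m p \<longrightarrow>
      (\<exists>q. in_P (m + 2) q
         \<and> (\<forall>x. - peval (hom_op abar q) x = peval p x)
         \<and> peval q 0 = 0
         \<and> (\<forall>\<alpha>. mdeg \<alpha> = 1 \<longrightarrow> peval (pderivm \<alpha> q) 0 = 0)
         \<and> (\<forall>n \<le> m. tnorm (n + 2) (grad_at (n + 2) q 0)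
               \<le> (\<Sum>k = n..m. C ^ k * tnorm k (grad_at k p 0)))))"
proof -
  define d where "d = real CARD('n)"
  define DD where "DD = d * \<bar>K\<bar>"
  define WW where "WW = (8*(DD+1))^3"
  show ?thesis
  proof (rule exI[of _ "d^3 * WW^2"], intro allI impI)
    fix abar :: "nat \<Rightarrow> ('n::finite \<Rightarrow> nat) \<Rightarrow> real" and m :: nat and p :: "('n \<Rightarrow> nat) \<Rightarrow> real"
    assume H: "unif_elliptic \<Lambda> (tmat (abar 2)) \<and> (\<forall>k. tnorm k (abar k) \<le> K ^ k)"
      and inP: "in_P m p"
    define i :: 'n where "i = undefined"
    define PP where "PP = (\<lambda>k. tnorm k (grad_at k p 0))"
    have "norm (axis i (1::real)) ^ 2 \<le> bilin (tmat (abar 2)) (axis i 1) (axis i 1)"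
      using H unfolding unif_elliptic_def by blast
    then have a11: "1 \<le> abar 2 (e2 i)"
      unfolding bilin_axis by (simp add: tmat_def e2_def)
    have a11': "abar 2 (e2 i) \<noteq> 0" using a11 by simp
    have hab: "\<bar>abar (mdeg \<alpha>) \<alpha>\<bar> \<le> \<bar>K\<bar> ^ mdeg \<alpha>" for \<alpha> :: "'n \<Rightarrow> nat"
    proof -
      have "\<bar>abar (mdeg \<alpha>) \<alpha>\<bar> \<le> tnorm (mdeg \<alpha>) (abar (mdeg \<alpha>))" by (rule entry_le_tnorm) simp
      also have "\<dots> \<le> K ^ mdeg \<alpha>" using H by blast
      also have "\<dots> \<le> \<bar>K\<bar> ^ mdeg \<alpha>" by (metis abs_ge_self power_abs)
      finally show ?thesis .
    qed
    have K0: "0 \<le> \<bar>K\<bar>" by simp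
    let ?q = "\<lambda>\<gamma>. cc abar p m i \<gamma> / mfact \<gamma>"
    show "\<exists>q. in_P (m + 2) q
         \<and> (\<forall>x. - peval (hom_op abar q) x = peval p x)
         \<and> peval q 0 = 0
         \<and> (\<forall>\<alpha>. mdeg \<alpha> = 1 \<longrightarrow> peval (pderivm \<alpha> q) 0 = 0)
         \<and> (\<forall>n \<le> m. tnorm (n + 2) (grad_at (n + 2) q 0)
               \<le> (\<Sum>k = n..m. (d^3 * WW^2) ^ k * tnorm k (grad_at k p 0)))"
    proof (intro exI[of _ ?q] conjI allI impI)
      show "in_P (m + 2) ?q" by (rule q_inP[where abar=abar and p=p and m=m and i=i, OF inP a11'])
      show "- peval (hom_op abar ?q) x = peval p x" for x by (rule peval_eq[where abar=abar and p=p and m=m and i=i, OF inP a11'])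
      show "peval ?q 0 = 0" by (rule q0[where abar=abar and p=p and m=m and i=i, OF inP a11'])
      show "peval (pderivm \<alpha> ?q) 0 = 0" if "mdeg \<alpha> = 1" for \<alpha>
        by (rule dq0[where abar=abar and p=p and m=m and i=i, OF inP a11' that])
      show "tnorm (n + 2) (grad_at (n + 2) ?q 0) \<le> (\<Sum>k = n..m. (d^3 * WW^2) ^ k * tnorm k (grad_at k p 0))"
        if "n \<le> m" for n
        using final_bound[OF d_def DD_def WW_def PP_def inP a11 hab K0 a11' that] unfolding PP_def .
    qed
  qed
qed



end
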